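(* Consider the two-bidder bidding game (defined in the context) in which both bidders have made the same ex-ante latency investment, so that $t_1=t_2$. Then this bidding game has a completely separating Bayesian Nash equilibrium, i.e. one in which each bidder's bid is a strictly increasing function of its valuation.
   Context: Fix a parameter $g>0$ and the boost function $\pi(b)=\frac{gb}{b+1}$ for $b\ge0$. Two bidders $i\in\{1,2\}$ have fixed latencies (timestamps) $t_1,t_2$ that are commonly known. Each bidder privately learns its valuation $v_i$, with $v_1,v_2$ independent and uniformly distributed on $[0,1]$, and then chooses a bid $b_i\ge0$. The bidder's score is $\pi(b_i)-t_i$; the bidder with the higher score has its transaction ordered first and receives its valuation. Bids are paid regardless of the outcome (all-pay), so bidder $i$'s payoff is $v_i\cdot\mathbf{1}[\text{$i$ has the higher score}]-b_i$. *)

theory Defs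
  imports "HOL-Analysis.Analysis"
begin

definition boost :: "real \<Rightarrow> real \<Rightarrow> real" where
  "boost g b = g * b / (b + 1)"

text \<open>Probability (valuation of the opponent j uniform on [0,1], opponent bidding
  according to strategy beta_j) that bidder i with latency t_i and bid b has
  strictly the higher score.\<close>
definition win_prob :: "real \<Rightarrow> real \<Rightarrow> real \<Rightarrow> (real \<Rightarrow> real) \<Rightarrow> real \<Rightarrow> real" where
  "win_prob g ti tj betaj b =
     measure lborel {w \<in> {0..1}. boost g b - ti > boost g (betaj w) - tj}"

definition exp_payoff :: "real \<Rightarrow> real \<Rightarrow> real \<Rightarrow> (real \<Rightarrow> real) \<Rightarrow> real \<Rightarrow> real \<Rightarrow> real" where
  "exp_payoff g ti tj betaj v b = v * win_prob g ti tj betaj b - b"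

definition is_BNE :: "real \<Rightarrow> real \<Rightarrow> real \<Rightarrow> (real \<Rightarrow> real) \<Rightarrow> (real \<Rightarrow> real) \<Rightarrow> bool" where
  "is_BNE g t1 t2 beta1 beta2 \<longleftrightarrow>
     (\<forall>v\<in>{0..1}. beta1 v \<ge> 0 \<and> beta2 v \<ge> 0) \<and>
     (\<forall>v\<in>{0..1}. \<forall>b\<ge>0. exp_payoff g t1 t2 beta2 v b \<le> exp_payoff g t1 t2 beta2 v (beta1 v)) \<and>
     (\<forall>v\<in>{0..1}. \<forall>b\<ge>0. exp_payoff g t2 t1 beta1 v b \<le> exp_payoff g t2 t1 beta1 v (beta2 v))"

end

theory Submission
  imports Defs
begin

lemma meas_Ico: "0 \<le> (a::real) \<Longrightarrow> measure lborel {0..<a} = a"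
  by (simp add: measure_def)

lemma meas_Icc01: "measure lborel {0..(1::real)} = 1"
  by (simp add: measure_def)

lemma boost_less:
  assumes "g > 0" "b \<ge> 0" "c \<ge> 0"
  shows "boost g c < boost g b \<longleftrightarrow> c < b"
proof -
  have "boost g c < boost g b \<longleftrightarrow> g * c * (b + 1) < g * b * (c + 1)"
    using assms by (simp add: boost_def divide_simps)
  also have "\<dots> \<longleftrightarrow> g * c < g * b" by (simp add: algebra_simps)
  also have "\<dots> \<longleftrightarrow> c < b" using assms by simp
  finally show ?thesis .
qed

lemma sq_lt_iff: "0 \<le> (w::real) \<Longrightarrow> w < sqrt y \<longleftrightarrow> w^2 < y"
proof -
  assume w: "0 \<le> w"
  have "sqrt (w^2) = w" using w by simp
  then show ?thesis using real_sqrt_less_iff[of "w^2" y] by simp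
qed

lemma win:
  assumes "g > 0" "b \<ge> 0"
  shows "win_prob g t t (\<lambda>v. v^2/2) b = min 1 (sqrt (2*b))"
proof -
  have S: "{w \<in> {0..1}. boost g b - t > boost g (w^2/2) - t} = {w \<in> {0..1}. w^2 < 2*b}"
    using boost_less[OF assms(1) assms(2)] by auto
  show ?thesis
  proof (cases "2*b > 1")
    case True
    have "w^2 < 2*b" if "w \<in> {0..1::real}" for w
    proof -
      have "w^2 \<le> 1" using that by (simp add: power_le_one)
      then show ?thesis using True by linarith
    qed
    then have "{w \<in> {0..1::real}. w^2 < 2*b} = {0..1}" by blast
    moreover have "sqrt (2*b) \<ge> 1" using True by simp
    ultimately show ?thesis unfolding win_prob_def S by (simp add: meas_Icc01)
  next
    case False
    have s1: "sqrt (2*b) \<le> 1" using False by simp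
    have "w \<in> {w \<in> {0..1::real}. w^2 < 2*b} \<longleftrightarrow> w \<in> {0..<sqrt (2*b)}" for w
    proof (cases "0 \<le> w")
      case True
      have "w < sqrt (2*b) \<Longrightarrow> w \<le> 1" using s1 by linarith
      then show ?thesis using sq_lt_iff[OF True, of "2*b"] True by auto
    qed simp
    then have "{w \<in> {0..1::real}. w^2 < 2*b} = {0..<sqrt (2*b)}" by blast
    then show ?thesis unfolding win_prob_def S using s1 meas_Ico[of "sqrt (2*b)"] assms by simp
  qed
qed

lemma key1:
  fixes v s :: real
  shows "v * s - s^2/2 \<le> v * v - v^2/2"
proof -
  have "0 \<le> (v - s)^2" by simp
  then show ?thesis by (simp add: power2_eq_square algebra_simps)
qed

theorem proposition4:
  fixes g t1 t2 :: real
  assumes "g > 0" and "t1 = t2"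
  shows "\<exists>beta1 beta2. strict_mono_on {0..1} beta1 \<and> strict_mono_on {0..1} beta2 \<and>
           is_BNE g t1 t2 beta1 beta2"
proof -
  let ?B = "\<lambda>v::real. v^2/2"
  have sm: "strict_mono_on {0..1} ?B"
    by (auto simp: strict_mono_on_def power_strict_mono)
  have opt: "exp_payoff g t1 t1 ?B v b \<le> exp_payoff g t1 t1 ?B v (?B v)"
    if v: "v \<in> {0..1}" and b: "b \<ge> 0" for v b
  proof -
    have "sqrt (2 * (v^2/2)) = v" using v by simp
    then have "min 1 (sqrt (2 * (v^2/2))) = v" using v by simp
    then have e1: "exp_payoff g t1 t1 ?B v (?B v) = v * v - v^2/2"
      using win[OF assms(1), of "v^2/2" t1] by (simp add: exp_payoff_def)
    have e2: "exp_payoff g t1 t1 ?B v b = v * min 1 (sqrt (2*b)) - b"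
      using win[OF assms(1) b, of t1] by (simp add: exp_payoff_def)
    show ?thesis
    proof (cases "sqrt (2*b) \<le> 1")
      case True
      have s2: "(sqrt (2*b))^2 = 2*b" using b by simp
      have "v * sqrt (2*b) - b \<le> v * v - v^2/2"
        using key1[of v "sqrt (2*b)"] s2 by simp
      then show ?thesis using True e1 e2 by simp
    next
      case False
      then have "2*b > 1" by (metis real_sqrt_le_1_iff not_le le_less_linear)
      have "v - b \<le> v * v - v^2/2"
        using \<open>2*b > 1\<close> zero_le_power2[of "v - 1"]
        by (simp add: power2_eq_square algebra_simps)
      then show ?thesis using False e1 e2 by simp
    qed
  qed
  show ?thesis
    apply (rule exI[of _ ?B], rule exI[of _ ?B])
    using sm opt assms(2) by (simp add: is_BNE_def)
qed

end
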